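(* Let $\mathcal A_1=(A,\to_{\mathcal A_1})$ and $\mathcal A_2=(A,\to_{\mathcal A_2})$ be ARSs on the same set $A$ and $\sim$ an equivalence relation on $A$. Suppose $\mathrm{NF}(\mathcal A_2)\subseteq\mathrm{NF}(\mathcal A_1)$ and $\to_{\mathcal A_2}\subseteq(\sim\cdot\to_{\mathcal A_1}\cdot\sim)^+$. If $\mathcal A_1$ is complete modulo $\sim$, then $\mathcal A_2$ is complete modulo $\sim$ and normalization equivalent modulo $\sim$ to $\mathcal A_1$.
   Context: $\mathrm{NF}(\mathcal A)$ is the set of normal forms of $\mathcal A$. $a\to^!_{\mathcal A}b$ means $a\to^*_{\mathcal A}b$ and $b\in\mathrm{NF}(\mathcal A)$. $\mathcal A$ is terminating modulo $\sim$ if $\sim\cdot\to_{\mathcal A}\cdot\sim$ admits no infinite sequence; Church–Rosser modulo $\sim$ if $(\leftarrow_{\mathcal A}\cup\to_{\mathcal A}\cup\sim)^*\subseteq\to^*_{\mathcal A}\cdot\sim\cdot\leftarrow^*_{\mathcal A}$; complete modulo $\sim$ if both. Normalization equivalent modulo $\sim$: $\to^!_{\mathcal A_1}\cdot\sim\;=\;\to^!_{\mathcal A_2}\cdot\sim$. *)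

theory Defs
  imports Main
begin

text \<open>An abstract rewrite system on a set A is modelled as a relation on a type 'a
(the type plays the role of the carrier A).\<close>

definition NF :: "'a rel \<Rightarrow> 'a set" where
  "NF R = {a. \<not> (\<exists>b. (a, b) \<in> R)}"

definition normalizes_to :: "'a rel \<Rightarrow> 'a rel" where
  "normalizes_to R = {(a, b). (a, b) \<in> R\<^sup>* \<and> b \<in> NF R}"

definition terminating_modulo :: "'a rel \<Rightarrow> 'a rel \<Rightarrow> bool" where
  "terminating_modulo R E \<longleftrightarrow> \<not> (\<exists>f :: nat \<Rightarrow> 'a. \<forall>i. (f i, f (Suc i)) \<in> E O R O E)"

definition CR_modulo :: "'a rel \<Rightarrow> 'a rel \<Rightarrow> bool" where
  "CR_modulo R E \<longleftrightarrow> (R\<inverse> \<union> R \<union> E)\<^sup>* \<subseteq> R\<^sup>* O E O (R\<^sup>*)\<inverse>"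

definition complete_modulo :: "'a rel \<Rightarrow> 'a rel \<Rightarrow> bool" where
  "complete_modulo R E \<longleftrightarrow> terminating_modulo R E \<and> CR_modulo R E"

definition normalization_equivalent_modulo :: "'a rel \<Rightarrow> 'a rel \<Rightarrow> 'a rel \<Rightarrow> bool" where
  "normalization_equivalent_modulo R1 R2 E \<longleftrightarrow> normalizes_to R1 O E = normalizes_to R2 O E"

end

theory Submission
  imports Defs
begin

lemma tm_wf: "terminating_modulo R E \<longleftrightarrow> wf ((E O R O E)\<inverse>)"
  unfolding terminating_modulo_def wf_iff_no_infinite_down_chain by auto

lemma nf_exists:
  assumes "wf (R\<inverse>)" shows "\<exists>b. (a, b) \<in> R\<^sup>* \<and> b \<in> NF R"
  using assms
proof (induction a rule: wf_induct_rule)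
  case (less a)
  show ?case
  proof (cases "a \<in> NF R")
    case True then show ?thesis by blast
  next
    case False
    then obtain c where c: "(a, c) \<in> R" unfolding NF_def by blast
    then obtain b where "(c, b) \<in> R\<^sup>*" "b \<in> NF R" using less by blast
    then show ?thesis using c by (meson converse_rtrancl_into_rtrancl)
  qed
qed

lemma nf_rtrancl: "(n, x) \<in> R\<^sup>* \<Longrightarrow> n \<in> NF R \<Longrightarrow> x = n"
  by (erule converse_rtranclE) (auto simp: NF_def)

lemma conv_sym:
  assumes "sym E" "(x, y) \<in> (R\<inverse> \<union> R \<union> E)\<^sup>*" shows "(y, x) \<in> (R\<inverse> \<union> R \<union> E)\<^sup>*"
proof -
  have "(R\<inverse> \<union> R \<union> E)\<inverse> = R\<inverse> \<union> R \<union> E" using assms(1) by (auto simp: sym_def)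
  then have "((R\<inverse> \<union> R \<union> E)\<^sup>*)\<inverse> = (R\<inverse> \<union> R \<union> E)\<^sup>*" by (metis rtrancl_converse)
  then show ?thesis using assms(2) by blast
qed

theorem lemma6p4:
  fixes R1 R2 E :: "'a rel"
  assumes "equiv UNIV E"
    and "NF R2 \<subseteq> NF R1"
    and "R2 \<subseteq> (E O R1 O E)\<^sup>+"
    and "complete_modulo R1 E"
  shows "complete_modulo R2 E \<and> normalization_equivalent_modulo R1 R2 E"
proof -
  have refl: "\<And>x. (x, x) \<in> E" using assms(1) by (auto simp: equiv_def refl_on_def)
  have symE: "sym E" using assms(1) by (auto simp: equiv_def)
  have trE: "trans E" using assms(1) by (auto simp: equiv_def)
  let ?S = "E O R1 O E"
  let ?C = "(R1\<inverse> \<union> R1 \<union> E)\<^sup>*"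
  have wf1: "wf (?S\<inverse>)" using assms(4) tm_wf complete_modulo_def by blast
  have cr1: "CR_modulo R1 E" using assms(4) complete_modulo_def by blast
  have ES: "E O ?S = ?S" "?S O E = ?S" using trE refl by (auto dest: transD)
  have S2: "E O R2 O E \<subseteq> ?S\<^sup>+"
  proof
    fix p assume "p \<in> E O R2 O E"
    then obtain x u v y where p: "p = (x, y)" "(x, u) \<in> E" "(u, v) \<in> R2" "(v, y) \<in> E" by blast
    have "(u, v) \<in> ?S\<^sup>+" using p(3) assms(3) by blast
    then obtain w where "(u, w) \<in> ?S" "(w, v) \<in> ?S\<^sup>*" by (meson tranclD)
    then have "(x, w) \<in> ?S" using p(2) ES(1) by blast
    with \<open>(w, v) \<in> ?S\<^sup>*\<close> have xv: "(x, v) \<in> ?S\<^sup>+" by (meson rtrancl_into_trancl2)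
    then obtain w' where "(x, w') \<in> ?S\<^sup>*" "(w', v) \<in> ?S" by (meson tranclD2)
    then have "(w', y) \<in> ?S" using p(4) ES(2) by blast
    with \<open>(x, w') \<in> ?S\<^sup>*\<close> show "p \<in> ?S\<^sup>+" using p(1) by (meson rtrancl_into_trancl1)
  qed
  have wfS2: "wf ((E O R2 O E)\<inverse>)"
  proof -
    have "wf ((?S\<inverse>)\<^sup>+)" using wf1 wf_trancl by blast
    then have "wf ((?S\<^sup>+)\<inverse>)" by (simp add: trancl_converse)
    then show ?thesis by (rule wf_subset) (use S2 in blast)
  qed
  have "R2 \<subseteq> E O R2 O E" using refl by (auto intro: relcompI)
  then have wfR2: "wf (R2\<inverse>)" using wfS2 by (meson converse_mono wf_subset)
  have "R1 \<subseteq> ?S" using refl by (auto intro: relcompI)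
  then have wfR1: "wf (R1\<inverse>)" using wf1 by (meson converse_mono wf_subset)
  have SC: "?S \<subseteq> ?C"
  proof
    fix p assume "p \<in> ?S"
    then obtain x u v y where p: "p = (x, y)" "(x, u) \<in> E" "(u, v) \<in> R1" "(v, y) \<in> E" by blast
    have "(x, u) \<in> ?C" "(u, v) \<in> ?C" "(v, y) \<in> ?C" using p by auto
    then show "p \<in> ?C" using p(1) by (meson rtrancl_trans)
  qed
  have "?S\<^sup>+ \<subseteq> ?C"
  proof
    fix p assume "p \<in> ?S\<^sup>+"
    then have "p \<in> ?S\<^sup>*" by (cases p) (simp add: trancl_into_rtrancl)
    moreover have "?S\<^sup>* \<subseteq> ?C" using SC by (metis rtrancl_idemp rtrancl_mono)
    ultimately show "p \<in> ?C" by blast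
  qed
  then have R2C: "R2 \<subseteq> ?C" using assms(3) by blast
  have R2sC: "(a, b) \<in> R2\<^sup>* \<Longrightarrow> (a, b) \<in> ?C" for a b
    by (induction rule: rtrancl_induct) (use R2C in \<open>blast intro: rtrancl_trans\<close>)+
  have nfE: "(n, m) \<in> ?C \<Longrightarrow> n \<in> NF R1 \<Longrightarrow> m \<in> NF R1 \<Longrightarrow> (n, m) \<in> E" for n m
  proof -
    assume a: "(n, m) \<in> ?C" "n \<in> NF R1" "m \<in> NF R1"
    then obtain x y where "(n, x) \<in> R1\<^sup>*" "(x, y) \<in> E" "(m, y) \<in> R1\<^sup>*"
      using cr1 unfolding CR_modulo_def by blast
    then show ?thesis using a nf_rtrancl by metis
  qed
  have C2: "(x, y) \<in> (R2\<inverse> \<union> R2 \<union> E)\<^sup>* \<Longrightarrow> (x, y) \<in> ?C" for x y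
  proof (induction rule: rtrancl_induct)
    case base then show ?case by simp
  next
    case (step y z)
    have "(y, z) \<in> ?C"
    proof -
      consider "(z, y) \<in> R2" | "(y, z) \<in> R2" | "(y, z) \<in> E" using step(2) by blast
      then show ?thesis
      proof cases
        case 1 then show ?thesis using R2C conv_sym[OF symE] by blast
      next
        case 2 then show ?thesis using R2C by blast
      qed blast
    qed
    then show ?case using step(3) by (meson rtrancl_trans)
  qed
  have cr2: "CR_modulo R2 E"
    unfolding CR_modulo_def
  proof
    fix p assume "p \<in> (R2\<inverse> \<union> R2 \<union> E)\<^sup>*"
    then obtain x y where p: "p = (x, y)" "(x, y) \<in> ?C" using C2 by (cases p) blast
    obtain nx where nx: "(x, nx) \<in> R2\<^sup>*" "nx \<in> NF R2" using nf_exists[OF wfR2] by blast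
    obtain ny where ny: "(y, ny) \<in> R2\<^sup>*" "ny \<in> NF R2" using nf_exists[OF wfR2] by blast
    have "(nx, x) \<in> ?C" using R2sC[OF nx(1)] conv_sym[OF symE] by blast
    then have "(nx, ny) \<in> ?C" using p(2) R2sC[OF ny(1)] by (meson rtrancl_trans)
    then have "(nx, ny) \<in> E" using nfE nx(2) ny(2) assms(2) by blast
    then show "p \<in> R2\<^sup>* O E O (R2\<^sup>*)\<inverse>" using p(1) nx(1) ny(1) by blast
  qed
  have key: "(a, n1) \<in> R1\<^sup>* \<Longrightarrow> n1 \<in> NF R1 \<Longrightarrow> (a, n2) \<in> R2\<^sup>* \<Longrightarrow> n2 \<in> NF R2 \<Longrightarrow> (n1, n2) \<in> E"
    for a n1 n2
  proof -
    assume a: "(a, n1) \<in> R1\<^sup>*" "n1 \<in> NF R1" "(a, n2) \<in> R2\<^sup>*" "n2 \<in> NF R2"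
    have "(a, n1) \<in> ?C" using a(1)
      by (induction rule: rtrancl_induct) (auto intro: rtrancl_into_rtrancl)
    then have "(n1, a) \<in> ?C" using conv_sym[OF symE] by blast
    then have "(n1, n2) \<in> ?C" using R2sC[OF a(3)] by (meson rtrancl_trans)
    then show ?thesis using nfE a assms(2) by blast
  qed
  have ne: "normalizes_to R1 O E = normalizes_to R2 O E"
  proof (rule set_eqI, rule iffI)
    fix p assume "p \<in> normalizes_to R1 O E"
    then obtain a n1 c where p: "p = (a, c)" "(a, n1) \<in> R1\<^sup>*" "n1 \<in> NF R1" "(n1, c) \<in> E"
      unfolding normalizes_to_def by blast
    obtain n2 where n2: "(a, n2) \<in> R2\<^sup>*" "n2 \<in> NF R2" using nf_exists[OF wfR2] by blast
    have "(n1, n2) \<in> E" using key p n2 by blast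
    then have "(n2, c) \<in> E" using p(4) symE trE by (meson symD transD)
    then show "p \<in> normalizes_to R2 O E" using p n2 unfolding normalizes_to_def by blast
  next
    fix p assume "p \<in> normalizes_to R2 O E"
    then obtain a n2 c where p: "p = (a, c)" "(a, n2) \<in> R2\<^sup>*" "n2 \<in> NF R2" "(n2, c) \<in> E"
      unfolding normalizes_to_def by blast
    obtain n1 where n1: "(a, n1) \<in> R1\<^sup>*" "n1 \<in> NF R1" using nf_exists[OF wfR1] by blast
    have "(n1, n2) \<in> E" using key p n1 by blast
    then have "(n1, c) \<in> E" using p(4) trE by (meson transD)
    then show "p \<in> normalizes_to R1 O E" using p n1 unfolding normalizes_to_def by blast
  qed
  show ?thesis using cr2 wfS2 ne tm_wf
    unfolding complete_modulo_def normalization_equivalent_modulo_def by blast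
qed

end
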